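(* Let $G_1,\dots,G_m$ be finite subgraphs of $\mathsf{Path}_{\mathbb Z}$, let $I\subseteq[m]$ with $m\in I$, let $\sigma=\sigma_I$, and let $j\in[m]$. Then \[\vec\Delta(G_{\tilde\sigma_j(1)},\dots,G_{\tilde\sigma_j(m)})\ \ge\ \sum_{i\in I}\Delta(G_i\ominus(G_1\cup\dots\cup G_{i-1})).\]
   Context: Graphs are finite simple graphs without isolated vertices; $\emptyset$ is the empty graph. $\mathsf{Path}_{\mathbb Z}$ has vertex set $\mathbb Z$ and edges $\{i-1,i\}$. $\Delta(G)$ is the number of connected components of $G$; $G\ominus F$ is the union of components of $G$ sharing no vertex with $F$; $\vec\Delta(H_1,\dots,H_m)=\sum_{l=1}^m\Delta(H_l\ominus(H_1\cup\dots\cup H_{l-1}))$. For $I\subseteq[m]$ with $m\in I$, write $I=\{i_1<\dots<i_p\}$ and $i_0:=0$; the permutation $\sigma_I$ of $[m]$ is $\sigma_I(j)=i_h$ if $j=i_{h-1}+1$ for some $h\in[p]$, and $\sigma_I(j)=j-1$ otherwise. For $\sigma=\sigma_I$ and $j\in[m]$, $\tilde\sigma_j:=\sigma_{\tilde I_j}$ where $\tilde I_j=I\cup[i_{h-1}]$ if $j=i_h\in I$, and $\tilde I_j=I\cup[j-1]$ if $j\notin I$ (here $[r]=\{1,\dots,r\}$, $[0]=\emptyset$). *)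

theory Defs
  imports Main
begin

(* A graph without isolated vertices is represented by its edge set;
   each edge is a 2-element set of vertices. *)
type_synonym graph = "int set set"

definition path_subgraph :: "graph \<Rightarrow> bool" where
  "path_subgraph E \<longleftrightarrow> finite E \<and> (\<forall>e\<in>E. \<exists>i::int. e = {i - 1, i})"

definition verts :: "graph \<Rightarrow> int set" where
  "verts E = \<Union> E"

definition adj :: "graph \<Rightarrow> int \<Rightarrow> int \<Rightarrow> bool" where
  "adj E u v \<longleftrightarrow> {u, v} \<in> E \<and> u \<noteq> v"

definition comps :: "graph \<Rightarrow> int set set" where
  "comps E = {{v. (adj E)\<^sup>*\<^sup>* u v} | u. u \<in> verts E}"

definition ncomp :: "graph \<Rightarrow> nat" where
  "ncomp E = card (comps E)"

definition ominus :: "graph \<Rightarrow> graph \<Rightarrow> graph" where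
  "ominus G F = {e \<in> G. \<exists>C\<in>comps G. e \<subseteq> C \<and> C \<inter> verts F = {}}"

(* vec-Delta of a list H_1..H_m (list position l-1 holds H_l) *)
definition vecDelta :: "graph list \<Rightarrow> nat" where
  "vecDelta Hs = (\<Sum>l<length Hs. ncomp (ominus (Hs ! l) (\<Union>k\<in>{..<l}. Hs ! k)))"

(* i_h for I = {i_1 < ... < i_p}, with i_0 = 0 *)
definition ix :: "nat set \<Rightarrow> nat \<Rightarrow> nat" where
  "ix I h = (if h = 0 then 0 else sorted_list_of_set I ! (h - 1))"

definition sigmaI :: "nat set \<Rightarrow> nat \<Rightarrow> nat" where
  "sigmaI I j =
     (if \<exists>h. 1 \<le> h \<and> h \<le> card I \<and> j = ix I (h - 1) + 1
      then ix I (THE h. 1 \<le> h \<and> h \<le> card I \<and> j = ix I (h - 1) + 1)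
      else j - 1)"

definition tildeI :: "nat set \<Rightarrow> nat \<Rightarrow> nat set" where
  "tildeI I j =
     (if j \<in> I
      then I \<union> {1..ix I ((THE h. 1 \<le> h \<and> h \<le> card I \<and> ix I h = j) - 1)}
      else I \<union> {1..<j})"

end

theory Submission
  imports Defs
begin
lemma adj_sym: "adj E u v = adj E v u"
  unfolding adj_def by (auto simp: insert_commute)

lemma rt_sym: "(adj E)\<^sup>*\<^sup>* u v \<Longrightarrow> (adj E)\<^sup>*\<^sup>* v u"
proof (induction rule: rtranclp_induct)
  case base then show ?case by simp
next
  case (step a b)
  then have "adj E b a" using adj_sym by metis
  then show ?case using step by (meson converse_rtranclp_into_rtranclp)
qed

lemma reach_eq: "(adj E)\<^sup>*\<^sup>* u v \<Longrightarrow> {x. (adj E)\<^sup>*\<^sup>* u x} = {x. (adj E)\<^sup>*\<^sup>* v x}"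
  using rt_sym by (auto intro: rtranclp_trans)

lemma adj_mono: "H \<subseteq> G \<Longrightarrow> (adj H)\<^sup>*\<^sup>* u v \<Longrightarrow> (adj G)\<^sup>*\<^sup>* u v"
  by (erule rtranclp_mono[THEN predicate2D, rotated]) (auto simp: adj_def)

lemma ominus_sub: "ominus G F \<subseteq> G" unfolding ominus_def by auto

lemma reach_ominus:
  assumes u: "u \<in> verts G" and C: "{x. (adj G)\<^sup>*\<^sup>* u x} \<inter> verts F = {}"
    and r: "(adj G)\<^sup>*\<^sup>* u v"
  shows "(adj (ominus G F))\<^sup>*\<^sup>* u v"
  using r
proof (induction rule: rtranclp_induct)
  case base then show ?case by simp
next
  case (step a b)
  let ?C = "{x. (adj G)\<^sup>*\<^sup>* u x}"
  have Cc: "?C \<in> comps G" using u unfolding comps_def by blast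
  have "{a, b} \<subseteq> ?C" using step(1,2) by (auto intro: rtranclp.rtrancl_into_rtrancl)
  moreover have "{a,b} \<in> G" "a \<noteq> b" using step(2) by (auto simp: adj_def)
  ultimately have "{a,b} \<in> ominus G F" using Cc C unfolding ominus_def by blast
  then have "adj (ominus G F) a b" using \<open>a \<noteq> b\<close> by (simp add: adj_def)
  then show ?case using step(3) by (meson rtranclp.rtrancl_into_rtrancl)
qed

lemma comps_ominus:
  assumes "path_subgraph G"
  shows "comps (ominus G F) = {C \<in> comps G. C \<inter> verts F = {}}"
proof
  show "comps (ominus G F) \<subseteq> {C \<in> comps G. C \<inter> verts F = {}}"
  proof
    fix C' assume "C' \<in> comps (ominus G F)"
    then obtain u where u: "u \<in> verts (ominus G F)" and C': "C' = {v. (adj (ominus G F))\<^sup>*\<^sup>* u v}"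
      unfolding comps_def by blast
    then obtain e where e: "u \<in> e" "e \<in> ominus G F" unfolding verts_def by blast
    then obtain C where C: "C \<in> comps G" "e \<subseteq> C" "C \<inter> verts F = {}" "e \<in> G"
      unfolding ominus_def by blast
    then obtain w where w: "C = {v. (adj G)\<^sup>*\<^sup>* w v}" unfolding comps_def by blast
    have "u \<in> C" using C e by blast
    then have Cu: "C = {v. (adj G)\<^sup>*\<^sup>* u v}" using w reach_eq by auto
    have uG: "u \<in> verts G" using e C unfolding verts_def by blast
    have "C' = C"
      using C' Cu adj_mono[OF ominus_sub] reach_ominus[OF uG, of F] C(3) by blast
    then show "C' \<in> {C \<in> comps G. C \<inter> verts F = {}}" using C by blast
  qed
next
  show "{C \<in> comps G. C \<inter> verts F = {}} \<subseteq> comps (ominus G F)"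
  proof
    fix C assume C: "C \<in> {C \<in> comps G. C \<inter> verts F = {}}"
    then obtain w where w: "w \<in> verts G" "C = {v. (adj G)\<^sup>*\<^sup>* w v}" unfolding comps_def by blast
    then obtain e where e: "w \<in> e" "e \<in> G" unfolding verts_def by blast
    then obtain i :: int where i: "e = {i - 1, i}" using assms unfolding path_subgraph_def by blast
    have "e \<subseteq> C"
    proof
      fix x assume "x \<in> e"
      show "x \<in> C"
      proof (cases "x = w")
        case True then show ?thesis using w by simp
      next
        case False
        then have "e = {w, x}" using i e \<open>x \<in> e\<close> by auto
        then have "adj G w x" using e False by (simp add: adj_def)
        then show ?thesis using w by simp
      qed
    qed
    then have "e \<in> ominus G F" using C e unfolding ominus_def by blast
    then have wH: "w \<in> verts (ominus G F)" using e unfolding verts_def by blast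
    have "C = {v. (adj (ominus G F))\<^sup>*\<^sup>* w v}"
      using w C adj_mono[OF ominus_sub] reach_ominus[OF w(1), of F] by blast
    then show "C \<in> comps (ominus G F)" using wH unfolding comps_def by blast
  qed
qed

lemma finite_comps:
  assumes "path_subgraph G"
  shows "finite (comps G)"
proof -
  have "finite (verts G)" using assms unfolding path_subgraph_def verts_def by auto
  moreover have "comps G = (\<lambda>u. {v. (adj G)\<^sup>*\<^sup>* u v}) ` verts G" unfolding comps_def by blast
  ultimately show ?thesis by simp
qed

lemma ncomp_mono:
  assumes "path_subgraph G" "F' \<subseteq> F"
  shows "ncomp (ominus G F) \<le> ncomp (ominus G F')"
proof -
  have "verts F' \<subseteq> verts F" using assms(2) unfolding verts_def by blast
  then have "{C \<in> comps G. C \<inter> verts F = {}} \<subseteq> {C \<in> comps G. C \<inter> verts F' = {}}" by blast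
  then show ?thesis unfolding ncomp_def comps_ominus[OF assms(1)]
    by (rule card_mono[rotated]) (simp add: finite_comps[OF assms(1)])
qed

lemma ix_in:
  assumes "finite J" "1 \<le> h" "h \<le> card J"
  shows "ix J h \<in> J"
proof -
  have "sorted_list_of_set J ! (h-1) \<in> set (sorted_list_of_set J)"
    using assms by (intro nth_mem) (simp add: length_sorted_list_of_set)
  then show ?thesis using assms by (simp add: ix_def)
qed

lemma ix_less:
  assumes "finite J" "0 \<notin> J" "a < b" "b \<le> card J"
  shows "ix J a < ix J b"
proof (cases "a = 0")
  case True
  have "ix J b \<in> J" using ix_in assms by auto
  then have "ix J b \<noteq> 0" using assms by metis
  then show ?thesis using True by (simp add: ix_def)
next
  case False
  have s: "sorted_wrt (<) (sorted_list_of_set J)" using assms(1) strict_sorted_list_of_set by blast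
  have "sorted_list_of_set J ! (a-1) < sorted_list_of_set J ! (b-1)"
    using sorted_wrt_nth_less[OF s, of "a-1" "b-1"] False assms by (simp add: length_sorted_list_of_set)
  then show ?thesis using False assms by (simp add: ix_def)
qed

lemma ix_le:
  assumes "finite J" "0 \<notin> J" "a \<le> b" "b \<le> card J"
  shows "ix J a \<le> ix J b"
  using ix_less[OF assms(1,2)] assms by (cases "a = b") (auto intro: less_imp_le)

lemma ix_surj:
  assumes "finite J" "p \<in> J"
  shows "\<exists>q. 1 \<le> q \<and> q \<le> card J \<and> p = ix J q"
proof -
  have "p \<in> set (sorted_list_of_set J)" using assms by simp
  then obtain i where "i < card J" "sorted_list_of_set J ! i = p"
    by (metis in_set_conv_nth length_sorted_list_of_set)
  then show ?thesis by (intro exI[of _ "Suc i"]) (auto simp: ix_def)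
qed

lemma sigma_case1:
  assumes "finite J" "0 \<notin> J" "h < card J"
  shows "sigmaI J (ix J h + 1) = ix J (h+1)"
proof -
  have ex: "\<exists>h'. 1 \<le> h' \<and> h' \<le> card J \<and> ix J h + 1 = ix J (h' - 1) + 1"
    using assms by (intro exI[of _ "h+1"]) auto
  have "(THE h'. 1 \<le> h' \<and> h' \<le> card J \<and> ix J h + 1 = ix J (h' - 1) + 1) = h + 1"
  proof (rule the_equality)
    show "1 \<le> h + 1 \<and> h + 1 \<le> card J \<and> ix J h + 1 = ix J (h + 1 - 1) + 1" using assms by auto
  next
    fix h' assume H: "1 \<le> h' \<and> h' \<le> card J \<and> ix J h + 1 = ix J (h' - 1) + 1"
    show "h' = h + 1"
    proof (rule ccontr)
      assume "h' \<noteq> h + 1"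
      then have "h' - 1 < h \<or> h < h' - 1" using H by auto
      then show False
      proof
        assume "h' - 1 < h" then show False using ix_less[OF assms(1,2), of "h'-1" h] H assms by auto
      next
        assume a: "h < h' - 1"
        have "h' - 1 \<le> card J" using H by auto
        then have "ix J h < ix J (h'-1)" using ix_less[OF assms(1,2) a] by blast
        then show False using H by auto
      qed
    qed
  qed
  then show ?thesis using ex by (simp add: sigmaI_def)
qed

lemma sigma_case2:
  assumes "\<not> (\<exists>h. 1 \<le> h \<and> h \<le> card J \<and> k = ix J (h - 1) + 1)"
  shows "sigmaI J k = k - 1"
  unfolding sigmaI_def by (simp only: if_not_P[OF assms])

lemma sigma_le:
  assumes "finite J" "0 \<notin> J" "k \<le> p" "p \<in> J"
  shows "sigmaI J k \<le> p"
proof (cases "\<exists>h. 1 \<le> h \<and> h \<le> card J \<and> k = ix J (h - 1) + 1")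
  case True
  then obtain h where h: "1 \<le> h" "h \<le> card J" "k = ix J (h - 1) + 1" by blast
  have sk: "sigmaI J k = ix J h" using sigma_case1[OF assms(1,2), of "h-1"] h by auto
  obtain q where q: "1 \<le> q" "q \<le> card J" "p = ix J q" using ix_surj assms by blast
  show ?thesis
  proof (cases "q < h")
    case True
    then have "ix J q \<le> ix J (h-1)" using ix_le[OF assms(1,2), of q "h-1"] h by auto
    then show ?thesis using q h assms by auto
  next
    case False
    then show ?thesis using sk q ix_le[OF assms(1,2), of h q] by auto
  qed
next
  case False
  then show ?thesis using assms sigma_case2 by simp
qed

lemma sigma_pos:
  assumes "finite J" "0 \<notin> J" "J \<noteq> {}" "1 \<le> k"
  shows "1 \<le> sigmaI J k"
proof (cases "\<exists>h. 1 \<le> h \<and> h \<le> card J \<and> k = ix J (h - 1) + 1")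
  case True
  then obtain h where h: "1 \<le> h" "h \<le> card J" "k = ix J (h - 1) + 1" by blast
  have sk: "sigmaI J k = ix J h" using sigma_case1[OF assms(1,2), of "h-1"] h by auto
  have "ix J h \<in> J" using ix_in assms h by auto
  then show ?thesis using sk assms by (cases "ix J h") auto
next
  case False
  have "card J \<ge> 1" using assms by (simp add: Suc_leI card_gt_0_iff)
  then have "k \<noteq> 1" using False by (auto simp: ix_def)
  then show ?thesis using False assms sigma_case2[OF False] by simp
qed

theorem lemma5p3:
  fixes m j :: nat and I :: "nat set" and G :: "nat \<Rightarrow> graph"
  assumes "\<forall>i\<in>{1..m}. path_subgraph (G i)"
    and "I \<subseteq> {1..m}" and "m \<in> I"
    and "j \<in> {1..m}"
  shows "vecDelta (map (\<lambda>k. G (sigmaI (tildeI I j) k)) [1..<m+1])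
           \<ge> (\<Sum>i\<in>I. ncomp (ominus (G i) (\<Union>k\<in>{1..<i}. G k)))"
proof -
  define J where "J = tildeI I j"
  have fI: "finite I" using assms(2) finite_subset by blast
  have fJ: "finite J" "0 \<notin> J" "I \<subseteq> J"
    using fI assms(2) unfolding J_def tildeI_def by auto
  have Jne: "J \<noteq> {}" using fJ assms(3) by blast
  define L where "L = map (\<lambda>k. G (sigmaI J k)) [1..<m+1]"
  have lenL: "length L = m" unfolding L_def by simp
  have Lnth: "L ! l = G (sigmaI J (l+1))" if "l < m" for l
    using that unfolding L_def by (simp del: upt_Suc add: nth_upt)
  define T where "T l = ncomp (ominus (L!l) (\<Union>k\<in>{..<l}. L!k))" for l
  have vD: "vecDelta L = (\<Sum>l<m. T l)" unfolding vecDelta_def T_def lenL by simp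
  define f where "f i = ncomp (ominus (G i) (\<Union>k\<in>{1..<i}. G k))" for i
  have key: "\<exists>l. l < m \<and> sigmaI J (l+1) = i \<and> f i \<le> T l" if iI: "i \<in> I" for i
  proof -
    have iJ: "i \<in> J" using iI fJ by blast
    obtain q where q: "1 \<le> q" "q \<le> card J" "i = ix J q" using ix_surj[OF fJ(1) iJ] by blast
    define l where "l = ix J (q-1)"
    have sl: "sigmaI J (l+1) = i" using sigma_case1[OF fJ(1,2), of "q-1"] q l_def by simp
    have li: "l < i" using ix_less[OF fJ(1,2), of "q-1" q] q l_def by simp
    have im: "i \<le> m" using iI assms(2) by auto
    have lm: "l < m" using li im by simp
    have Ll: "L ! l = G i" using Lnth[OF lm] sl by simp
    have sub: "(\<Union>k\<in>{..<l}. L!k) \<subseteq> (\<Union>k\<in>{1..<i}. G k)"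
    proof
      fix x assume "x \<in> (\<Union>k\<in>{..<l}. L!k)"
      then obtain k where k: "k < l" "x \<in> L!k" by blast
      have "q - 1 \<noteq> 0" using k(1) l_def by (auto simp: ix_def)
      then have pJ: "l \<in> J" using ix_in[OF fJ(1), of "q-1"] q l_def by simp
      have "sigmaI J (k+1) \<le> l" using sigma_le[OF fJ(1,2) _ pJ] k(1) by simp
      moreover have "1 \<le> sigmaI J (k+1)" using sigma_pos[OF fJ(1,2) Jne] by simp
      moreover have "x \<in> G (sigmaI J (k+1))" using k Lnth[of k] lm by simp
      ultimately show "x \<in> (\<Union>k\<in>{1..<i}. G k)" using li by auto
    qed
    have "path_subgraph (G i)" using assms(1,2) iI by blast
    then have "f i \<le> T l" unfolding f_def T_def Ll using ncomp_mono sub by blast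
    then show ?thesis using lm sl by blast
  qed
  then obtain pos where pos: "\<forall>i\<in>I. pos i < m \<and> sigmaI J (pos i + 1) = i \<and> f i \<le> T (pos i)"
    by metis
  have inj: "inj_on pos I"
  proof (rule inj_onI)
    fix a b assume "a \<in> I" "b \<in> I" "pos a = pos b"
    then show "a = b" using pos by metis
  qed
  have "(\<Sum>i\<in>I. f i) \<le> (\<Sum>i\<in>I. T (pos i))" using pos by (intro sum_mono) blast
  also have "\<dots> = (\<Sum>l\<in>pos ` I. T l)" using sum.reindex[OF inj, of T] by (simp add: comp_def)
  also have "\<dots> \<le> (\<Sum>l<m. T l)" using pos by (intro sum_mono2) auto
  finally show ?thesis using vD unfolding L_def J_def f_def by simp
qed

end
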